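(* Let $V=(v_1,\dots,v_D)$ be a non-increasing sequence of positive integers. If $\mathcal T$ is a $V$-regular rooted tree with depth $k$, then $\mathcal T$ is isomorphic to $\mathcal T_V^k$.
   Context: A rooted tree is a directed tree whose edges all point toward the root; its depth is the maximal distance of a vertex to the root. A vertex $c$ is a $k$-distant predecessor of $b$ if $c$ is at distance $k$ from $b$, i.e. there is a directed path of length $k$ from $c$ to $b$. With $v_i=v_D$ for all $i\ge D$, a directed graph is $V$-regular if for every positive integer $k$ and every vertex, the number of $k$-distant predecessors of that vertex is either $0$ or $v_1\cdots v_k$. Put $v_i=v_D$ for $i\ge D+1$; $\bullet$ is the one-vertex tree; for rooted trees $\mathcal T_1,\dots,\mathcal T_s$, $\langle\mathcal T_1\oplus\dots\oplus\mathcal T_s\rangle$ is the rooted tree whose root's children are roots of copies of $\mathcal T_1,\dots,\mathcal T_s$, and $k\times\mathcal T$ denotes $k$ disjoint copies of $\mathcal T$. Define $\mathcal T_V^0=\bullet$ and $\mathcal T_V^k=\big\langle v_k\times\mathcal T_V^{k-1}\oplus\bigoplus_{i=1}^{k-1}(v_i-v_{i+1})\times\mathcal T_V^{i-1}\big\rangle$ for $k\ge1$. *)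

theory Defs
  imports Main
begin

text \<open>Directed graphs are given by a vertex set Vs and an edge relation E.
  A rooted tree has all edges pointing toward the root r.\<close>

definition rooted_tree :: "'a set \<Rightarrow> ('a \<times> 'a) set \<Rightarrow> 'a \<Rightarrow> bool" where
  "rooted_tree Vs E r \<longleftrightarrow>
     E \<subseteq> Vs \<times> Vs \<and> r \<in> Vs \<and> (\<forall>y. (r, y) \<notin> E) \<and>
     (\<forall>x\<in>Vs. x \<noteq> r \<longrightarrow> (\<exists>!y. (x, y) \<in> E)) \<and>
     (\<forall>x\<in>Vs. (x, r) \<in> E\<^sup>*)"

definition distant_preds :: "'a set \<Rightarrow> ('a \<times> 'a) set \<Rightarrow> nat \<Rightarrow> 'a \<Rightarrow> 'a set" where
  "distant_preds Vs E k b = {c \<in> Vs. (c, b) \<in> E ^^ k}"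

definition tree_depth :: "'a set \<Rightarrow> ('a \<times> 'a) set \<Rightarrow> 'a \<Rightarrow> nat \<Rightarrow> bool" where
  "tree_depth Vs E r k \<longleftrightarrow>
     (\<exists>x\<in>Vs. (x, r) \<in> E ^^ k) \<and> (\<forall>x\<in>Vs. \<forall>n. (x, r) \<in> E ^^ n \<longrightarrow> n \<le> k)"

text \<open>The extended sequence v_i (1-based), with v_i = v_D for i >= D.\<close>
definition vseq :: "nat list \<Rightarrow> nat \<Rightarrow> nat" where
  "vseq vs i = vs ! (min i (length vs) - 1)"

definition V_regular :: "nat list \<Rightarrow> 'a set \<Rightarrow> ('a \<times> 'a) set \<Rightarrow> bool" where
  "V_regular vs Vs E \<longleftrightarrow>
     (\<forall>k>0. \<forall>b\<in>Vs. distant_preds Vs E k b = {} \<or>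
        (finite (distant_preds Vs E k b) \<and>
         card (distant_preds Vs E k b) = (\<Prod>i=1..k. vseq vs i)))"

definition rtree_iso :: "'a set \<Rightarrow> ('a \<times> 'a) set \<Rightarrow> 'a \<Rightarrow> 'b set \<Rightarrow> ('b \<times> 'b) set \<Rightarrow> 'b \<Rightarrow> bool" where
  "rtree_iso Vs1 E1 r1 Vs2 E2 r2 \<longleftrightarrow>
     (\<exists>f. bij_betw f Vs1 Vs2 \<and> f r1 = r2 \<and>
        (\<forall>x\<in>Vs1. \<forall>y\<in>Vs1. (x, y) \<in> E1 \<longleftrightarrow> (f x, f y) \<in> E2))"

datatype rtree = Node "rtree list"

fun TV :: "nat list \<Rightarrow> nat \<Rightarrow> rtree" where
  "TV vs 0 = Node []"
| "TV vs (Suc k) = Node (replicate (vseq vs (Suc k)) (TV vs k) @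
     concat (map (\<lambda>i. replicate (vseq vs i - vseq vs (i + 1)) (TV vs (i - 1))) [1..<Suc k]))"

text \<open>Vertices of an rtree are addresses (paths of child indices from the root).\<close>
fun subtree_at :: "rtree \<Rightarrow> nat list \<Rightarrow> rtree option" where
  "subtree_at t [] = Some t"
| "subtree_at (Node ts) (j # p) = (if j < length ts then subtree_at (ts ! j) p else None)"

definition tree_verts :: "rtree \<Rightarrow> nat list set" where
  "tree_verts t = {p. subtree_at t p \<noteq> None}"

definition tree_edges :: "rtree \<Rightarrow> (nat list \<times> nat list) set" where
  "tree_edges t = {(p, butlast p) | p. p \<in> tree_verts t \<and> p \<noteq> []}"

end

theory Submission
  imports Defs
begin


lemma count_list_replicate': "count_list (replicate n x) a = (if x = a then n else 0)"
  by (induction n) auto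

lemma card_filter_count: "card {j. j < length xs \<and> xs ! j = a} = count_list xs a"
  by (simp add: count_list_eq_length_filter length_filter_conv_card eq_commute)

lemma glue:
  assumes "finite A" "finite B" "\<And>a. card {x\<in>A. g x = a} = card {y\<in>B. g' y = a}"
  shows "\<exists>\<sigma>. bij_betw \<sigma> A B \<and> (\<forall>x\<in>A. g' (\<sigma> x) = g x)"
proof -
  have "\<forall>a. \<exists>\<beta>. bij_betw \<beta> {x\<in>A. g x = a} {y\<in>B. g' y = a}"
    using assms by (intro allI finite_same_card_bij) auto
  then obtain \<beta> where \<beta>: "\<And>a. bij_betw (\<beta> a) {x\<in>A. g x = a} {y\<in>B. g' y = a}"
    by metis
  define \<sigma> where "\<sigma> x = \<beta> (g x) x" for x
  have im: "\<sigma> x \<in> B \<and> g' (\<sigma> x) = g x" if "x \<in> A" for x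
    using \<beta>[of "g x"] that unfolding \<sigma>_def bij_betw_def by auto
  have "inj_on \<sigma> A"
  proof (rule inj_onI)
    fix x y assume xy: "x \<in> A" "y \<in> A" "\<sigma> x = \<sigma> y"
    then have "g x = g y" using im by metis
    then show "x = y" using \<beta>[of "g x"] xy unfolding \<sigma>_def bij_betw_def inj_on_def by auto
  qed
  moreover have "\<sigma> ` A = B"
  proof
    show "\<sigma> ` A \<subseteq> B" using im by auto
    show "B \<subseteq> \<sigma> ` A"
    proof
      fix y assume "y \<in> B"
      then have "y \<in> \<beta> (g' y) ` {x\<in>A. g x = g' y}" using \<beta>[of "g' y"] unfolding bij_betw_def by auto
      then show "y \<in> \<sigma> ` A" unfolding \<sigma>_def by force
    qed
  qed
  ultimately show ?thesis using im unfolding bij_betw_def by auto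
qed

fun hs :: "nat list \<Rightarrow> nat \<Rightarrow> nat list" where
  "hs vs 0 = []"
| "hs vs (Suc m) = replicate (vseq vs (Suc m)) m @
     concat (map (\<lambda>i. replicate (vseq vs i - vseq vs (i + 1)) (i - 1)) [1..<Suc m])"

lemma TV_hs: "TV vs h = Node (map (TV vs) (hs vs h))"
  by (cases h) (simp_all add: map_concat comp_def map_replicate)

lemma count_cc: "count_list (concat (map (\<lambda>i. replicate (vseq vs i - vseq vs (i + 1)) (i - 1)) [1..<Suc m])) a
   = (if a < m then vseq vs (a+1) - vseq vs (a+2) else 0)"
proof (induction m)
  case (Suc m)
  have "[1..<Suc (Suc m)] = [1..<Suc m] @ [Suc m]" by simp
  then show ?case using Suc by (simp add: count_list_replicate')
qed simp

lemma count_hs: "count_list (hs vs h) a =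
   (if a+1 \<le> h then vseq vs (a+1) else 0) - (if a+2 \<le> h then vseq vs (a+2) else 0)"
proof (cases h)
  case (Suc m)
  show ?thesis unfolding Suc hs.simps count_list_append count_list_replicate' count_cc
    by (cases "a = m") auto
qed simp

lemma tree_verts_Node: "tree_verts (Node ts) = insert [] {j # p | j p. j < length ts \<and> p \<in> tree_verts (ts ! j)}"
proof (intro set_eqI)
  fix q show "q \<in> tree_verts (Node ts) \<longleftrightarrow> q \<in> insert [] {j # p | j p. j < length ts \<and> p \<in> tree_verts (ts ! j)}"
    unfolding tree_verts_def by (cases q) auto
qed

lemma tree_edges_iff: "(p, q) \<in> tree_edges t \<longleftrightarrow> p \<in> tree_verts t \<and> p \<noteq> [] \<and> q = butlast p"
  unfolding tree_edges_def by auto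

lemma vseq_pos: assumes "vs \<noteq> []" "\<forall>x\<in>set vs. 0 < x" shows "0 < vseq vs i"
proof -
  have "min i (length vs) - 1 < length vs" using assms by (cases "i \<le> length vs") (auto simp: min_def, cases vs, auto)
  then show ?thesis using assms unfolding vseq_def by auto
qed



locale vt =
  fixes vs :: "nat list" and Vs :: "'a set" and E :: "('a \<times> 'a) set" and r :: 'a and k :: nat
  assumes ne: "vs \<noteq> []" and pos: "\<forall>x\<in>set vs. 0 < x"
    and rt: "rooted_tree Vs E r" and reg: "V_regular vs Vs E" and dep: "tree_depth Vs E r k"
begin

lemma E_sub: "(x,y) \<in> E \<Longrightarrow> x \<in> Vs \<and> y \<in> Vs"
  using rt unfolding rooted_tree_def by auto

lemma r_in: "r \<in> Vs" and r_no: "(r,y) \<notin> E"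
  using rt unfolding rooted_tree_def by auto

lemma reach: "x \<in> Vs \<Longrightarrow> (x,r) \<in> E\<^sup>*"
  using rt unfolding rooted_tree_def by auto

lemma uniq: "(x,y) \<in> E \<Longrightarrow> (x,z) \<in> E \<Longrightarrow> y = z"
proof -
  assume a: "(x,y) \<in> E" "(x,z) \<in> E"
  then have "x \<in> Vs" "x \<noteq> r" using E_sub r_no by auto
  then have "\<exists>!y. (x,y) \<in> E" using rt unfolding rooted_tree_def by auto
  then show "y = z" using a by auto
qed

lemma relpow_Vs: "(x,y) \<in> E ^^ n \<Longrightarrow> y \<in> Vs \<Longrightarrow> x \<in> Vs"
proof (induction n arbitrary: y)
  case (Suc n)
  then obtain w where "(x,w) \<in> E ^^ n" "(w,y) \<in> E" by auto
  then show ?case using Suc E_sub by blast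
qed simp

lemma det: "(x,y) \<in> E ^^ n \<Longrightarrow> (x,z) \<in> E ^^ m \<Longrightarrow> n \<le> m \<Longrightarrow> (y,z) \<in> E ^^ (m - n)"
proof (induction n arbitrary: x m)
  case (Suc n)
  then obtain m' where m: "m = Suc m'" by (cases m) auto
  obtain w where w: "(x,w) \<in> E" "(w,y) \<in> E ^^ n" using Suc.prems(1) relpow_Suc_D2 by metis
  obtain w' where w': "(x,w') \<in> E" "(w',z) \<in> E ^^ m'" using Suc.prems(2) m relpow_Suc_D2 by metis
  have "w = w'" using w w' uniq by blast
  then show ?case using Suc.IH[of w m'] w w' m Suc.prems(3) by auto
qed simp

definition d :: "'a \<Rightarrow> nat" where "d x = (LEAST n. (x,r) \<in> E ^^ n)"

lemma no_cyc_r: "(r,r) \<in> E ^^ j \<Longrightarrow> j = 0"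
proof (rule ccontr)
  assume a: "(r,r) \<in> E ^^ j" "j \<noteq> 0"
  then obtain i where "j = Suc i" using not0_implies_Suc by blast
  then have "(r,r) \<in> E ^^ Suc i" using a by simp
  then have "\<exists>w. (r,w) \<in> E \<and> (w,r) \<in> E ^^ i" by (rule relpow_Suc_D2)
  then show False using r_no by blast
qed

lemma d_eq: assumes "(x,r) \<in> E ^^ n" shows "d x = n"
proof -
  have u: "m = n" if "(x,r) \<in> E ^^ m" for m
  proof (cases "m \<le> n")
    case True
    then have "n - m = 0" using no_cyc_r det[OF that assms True] by blast
    then show ?thesis using True by simp
  next
    case False
    then have "m - n = 0" using no_cyc_r det[OF assms that] by fastforce
    then show ?thesis using False by simp
  qed
  show ?thesis unfolding d_def
  proof (rule Least_equality)
    show "(x,r) \<in> E ^^ n" by (rule assms)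
    fix m assume "(x,r) \<in> E ^^ m" then show "n \<le> m" using u by simp
  qed
qed

lemma d_Vs: assumes "x \<in> Vs" shows "(x,r) \<in> E ^^ d x"
proof -
  obtain n where "(x,r) \<in> E ^^ n" using reach[OF assms] rtrancl_power by blast
  then show ?thesis using d_eq by simp
qed

lemma d_path: assumes "(x,b) \<in> E ^^ n" "b \<in> Vs" shows "d x = d b + n"
proof -
  have "(x,r) \<in> E ^^ n O E ^^ d b" using assms d_Vs[of b] by blast
  then have "(x,r) \<in> E ^^ (n + d b)" by (simp add: relpow_add)
  then show ?thesis using d_eq by simp
qed

lemma d_le: "x \<in> Vs \<Longrightarrow> d x \<le> k"
  using dep d_Vs unfolding tree_depth_def by blast

definition P :: "'a \<Rightarrow> 'a set" where "P b = {x \<in> Vs. \<exists>n. (x,b) \<in> E ^^ n}"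
definition C :: "'a \<Rightarrow> 'a set" where "C b = {c. (c,b) \<in> E}"
definition ht :: "'a \<Rightarrow> nat" where "ht b = Max {n. \<exists>x\<in>Vs. (x,b) \<in> E ^^ n}"

lemma ht_fin: "b \<in> Vs \<Longrightarrow> finite {n. \<exists>x\<in>Vs. (x,b) \<in> E ^^ n}"
proof -
  assume b: "b \<in> Vs"
  have "{n. \<exists>x\<in>Vs. (x,b) \<in> E ^^ n} \<subseteq> {..k}"
  proof
    fix n assume "n \<in> {n. \<exists>x\<in>Vs. (x,b) \<in> E ^^ n}"
    then obtain x where "x \<in> Vs" "(x,b) \<in> E ^^ n" by auto
    then have "d x = d b + n" "d x \<le> k" using d_path[OF _ b] d_le by blast+
    then show "n \<in> {..k}" by simp
  qed
  then show ?thesis using finite_subset by blast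
qed

lemma ht_ge: "b \<in> Vs \<Longrightarrow> x \<in> Vs \<Longrightarrow> (x,b) \<in> E ^^ n \<Longrightarrow> n \<le> ht b"
  unfolding ht_def using ht_fin by (intro Max_ge) auto

lemma ht_ex: assumes "b \<in> Vs" shows "\<exists>x\<in>Vs. (x,b) \<in> E ^^ ht b"
proof -
  have "ht b \<in> {n. \<exists>x\<in>Vs. (x,b) \<in> E ^^ n}"
    unfolding ht_def using ht_fin[OF assms] assms by (intro Max_in) (auto intro!: exI[of _ 0] bexI[of _ b])
  then show ?thesis by auto
qed

lemma dp_ne: assumes b: "b \<in> Vs" shows "distant_preds Vs E m b \<noteq> {} \<longleftrightarrow> m \<le> ht b"
proof
  assume "distant_preds Vs E m b \<noteq> {}"
  then show "m \<le> ht b" using ht_ge[OF b] unfolding distant_preds_def by auto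
next
  assume m: "m \<le> ht b"
  obtain x where x: "x \<in> Vs" "(x,b) \<in> E ^^ ht b" using ht_ex b by blast
  have "(x,b) \<in> E ^^ (ht b - m) O E ^^ m" using x m relpow_add[of "ht b - m" m E] by simp
  then obtain y where "(y,b) \<in> E ^^ m" by blast
  then show "distant_preds Vs E m b \<noteq> {}" using relpow_Vs b unfolding distant_preds_def by blast
qed

definition Pi :: "nat \<Rightarrow> nat" where "Pi m = (\<Prod>i=1..m. vseq vs i)"

lemma Pi_pos: "0 < Pi m"
  unfolding Pi_def using vseq_pos[OF ne pos] by (simp add: prod_pos)

lemma Pi_Suc: "Pi (Suc m) = Pi m * vseq vs (Suc m)"
  unfolding Pi_def by (simp add: prod.nat_ivl_Suc')

lemma dp_card: assumes b: "b \<in> Vs"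
  shows "finite (distant_preds Vs E m b) \<and> card (distant_preds Vs E m b) = (if m \<le> ht b then Pi m else 0)"
proof (cases "m = 0")
  case True
  then have "distant_preds Vs E m b = {b}" using b unfolding distant_preds_def by auto
  then show ?thesis using True by (simp add: Pi_def)
next
  case False
  then have "distant_preds Vs E m b = {} \<or> (finite (distant_preds Vs E m b) \<and> card (distant_preds Vs E m b) = Pi m)"
    using reg b unfolding V_regular_def Pi_def by auto
  then show ?thesis using dp_ne[OF b, of m] by auto
qed

lemma C_dp: "C b = distant_preds Vs E 1 b"
  unfolding C_def distant_preds_def using E_sub by auto

lemma C_fin: "b \<in> Vs \<Longrightarrow> finite (C b)"
  using dp_card C_dp by metis

lemma C_Vs: "c \<in> C b \<Longrightarrow> c \<in> Vs"
  unfolding C_def using E_sub by auto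

lemma dp_Suc: "distant_preds Vs E (Suc m) b = (\<Union>c\<in>C b. distant_preds Vs E m c)"
  unfolding distant_preds_def C_def by auto

lemma dp_disj: "c \<in> C b \<Longrightarrow> c' \<in> C b \<Longrightarrow> c \<noteq> c' \<Longrightarrow> distant_preds Vs E m c \<inter> distant_preds Vs E m c' = {}"
  unfolding distant_preds_def using det[of _ c m _ m] by fastforce

lemma N_eq: assumes b: "b \<in> Vs"
  shows "card {c \<in> C b. m \<le> ht c} = (if Suc m \<le> ht b then vseq vs (Suc m) else 0)"
proof -
  have "card (distant_preds Vs E (Suc m) b) = (\<Sum>c\<in>C b. card (distant_preds Vs E m c))"
    unfolding dp_Suc using C_fin[OF b] dp_card C_Vs dp_disj by (intro card_UN_disjoint) auto
  also have "\<dots> = (\<Sum>c\<in>C b. if m \<le> ht c then Pi m else 0)"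
    using dp_card C_Vs by (intro sum.cong) auto
  also have "\<dots> = card {c \<in> C b. m \<le> ht c} * Pi m"
    using C_fin[OF b] by (simp add: sum.If_cases Int_def conj_commute)
  finally have e1: "card (distant_preds Vs E (Suc m) b) = card {c \<in> C b. m \<le> ht c} * Pi m" .
  have e2: "card (distant_preds Vs E (Suc m) b) = (if Suc m \<le> ht b then vseq vs (Suc m) * Pi m else 0)"
    using dp_card[OF b, of "Suc m"] by (simp add: Pi_Suc)
  show ?thesis
  proof (cases "Suc m \<le> ht b")
    case True
    then have "card (distant_preds Vs E (Suc m) b) = vseq vs (Suc m) * Pi m" using e2 by simp
    then have "card {c \<in> C b. m \<le> ht c} * Pi m = vseq vs (Suc m) * Pi m" using e1 by metis
    then show ?thesis using True Pi_pos[of m] by (metis mult_right_cancel not_gr0)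
  next
    case False
    then have "card {c \<in> C b. m \<le> ht c} * Pi m = 0" using e1 e2 by simp
    then show ?thesis using False Pi_pos[of m] by simp
  qed
qed

lemma cnt: assumes b: "b \<in> Vs"
  shows "card {c \<in> C b. ht c = a} = count_list (hs vs (ht b)) a"
proof -
  have "{c \<in> C b. a \<le> ht c} = {c \<in> C b. ht c = a} \<union> {c \<in> C b. Suc a \<le> ht c}" by auto
  moreover have "card ({c \<in> C b. ht c = a} \<union> {c \<in> C b. Suc a \<le> ht c}) = card {c \<in> C b. ht c = a} + card {c \<in> C b. Suc a \<le> ht c}"
    using C_fin[OF b] by (intro card_Un_disjoint) auto
  ultimately have "card {c \<in> C b. a \<le> ht c} = card {c \<in> C b. ht c = a} + card {c \<in> C b. Suc a \<le> ht c}"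
    by simp
  then show ?thesis using N_eq[OF b, of a] N_eq[OF b, of "Suc a"] count_hs[of vs "ht b" a]
    by (cases "Suc a \<le> ht b"; cases "Suc (Suc a) \<le> ht b") simp_all
qed

end


context vt begin

lemma P_self: assumes "b \<in> Vs" shows "b \<in> P b"
proof -
  have "(b,b) \<in> E ^^ 0" by simp
  then show ?thesis unfolding P_def using assms by blast
qed

lemma P_Vs: "P b \<subseteq> Vs" unfolding P_def by auto

lemma P_d: assumes "x \<in> P b" "b \<in> Vs" shows "d b \<le> d x"
proof -
  obtain n where "(x,b) \<in> E ^^ n" using assms unfolding P_def by blast
  then have "d x = d b + n" using d_path assms(2) by blast
  then show ?thesis by simp
qed

lemma C_d: assumes "c \<in> C b" shows "d c = Suc (d b)"
proof -
  have e: "(c,b) \<in> E" using assms unfolding C_def by simp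
  then have "(c,b) \<in> E ^^ 1" by simp
  moreover have "b \<in> Vs" using E_sub e by blast
  ultimately have "d c = d b + 1" by (rule d_path)
  then show ?thesis by simp
qed

lemma C_P: assumes "c \<in> C b" "x \<in> P c" shows "x \<in> P b"
proof -
  obtain n where n: "x \<in> Vs" "(x,c) \<in> E ^^ n" using assms unfolding P_def by blast
  have "(c,b) \<in> E" using assms unfolding C_def by simp
  then have "(x,b) \<in> E ^^ Suc n" using n(2) by (rule relpow_Suc_I[rotated])
  then show ?thesis unfolding P_def using n(1) by blast
qed

lemma b_notin: assumes "c \<in> C b" "b \<in> Vs" shows "b \<notin> P c"
proof
  assume "b \<in> P c"
  then have "d c \<le> d b" using P_d C_Vs assms(1) by blast
  then show False using C_d[OF assms(1)] by simp
qed

lemma par_ex: assumes "x \<in> P b" "x \<noteq> b" shows "\<exists>c\<in>C b. x \<in> P c"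
proof -
  obtain n where n: "x \<in> Vs" "(x,b) \<in> E ^^ n" using assms unfolding P_def by auto
  have "n \<noteq> 0" using n assms by (cases n) auto
  then obtain m where m: "n = Suc m" using not0_implies_Suc by blast
  then have "(x,b) \<in> E ^^ m O E" using n by simp
  then obtain c where "(x,c) \<in> E ^^ m" "(c,b) \<in> E" by blast
  then show ?thesis unfolding P_def C_def using n by blast
qed

lemma par_un: assumes "c \<in> C b" "c' \<in> C b" "x \<in> P c" "x \<in> P c'" shows "c = c'"
proof -
  obtain n where n: "x \<in> Vs" "(x,c) \<in> E ^^ n" using assms unfolding P_def by blast
  obtain n' where n': "(x,c') \<in> E ^^ n'" using assms unfolding P_def by blast
  have "d x = d c + n" using n d_path C_Vs assms(1) by blast
  moreover have "d x = d c' + n'" using n' d_path C_Vs assms(2) by blast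
  ultimately have "n = n'" using C_d[OF assms(1)] C_d[OF assms(2)] by simp
  then have "(c,c') \<in> E ^^ 0" using det[OF n(2) n'] by simp
  then show ?thesis by simp
qed

lemma ht_C: assumes "c \<in> C b" "b \<in> Vs" shows "ht c < ht b"
proof -
  obtain x where x: "x \<in> Vs" "(x,c) \<in> E ^^ ht c" using ht_ex C_Vs assms by blast
  moreover have "(c,b) \<in> E" using assms unfolding C_def by auto
  ultimately have "(x,b) \<in> E ^^ Suc (ht c)" by (intro relpow_Suc_I)
  then have "Suc (ht c) \<le> ht b" using ht_ge[OF assms(2) x(1)] by blast
  then show ?thesis by simp
qed

lemma edge_in: assumes "c \<in> C b" "x \<in> P c" "(x,y) \<in> E" "y \<noteq> b" shows "y \<in> P c"
proof -
  obtain n where n: "x \<in> Vs" "(x,c) \<in> E ^^ n" using assms unfolding P_def by blast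
  have cb: "(c,b) \<in> E" using assms unfolding C_def by auto
  have "n \<noteq> 0"
  proof
    assume "n = 0" then have "x = c" using n by simp
    then have "(x,b) \<in> E" using cb by simp
    then have "y = b" by (rule uniq[OF assms(3)])
    then show False using assms by simp
  qed
  then obtain m where "n = Suc m" using not0_implies_Suc by blast
  then have "(x,c) \<in> E ^^ Suc m" using n by simp
  then have "\<exists>w. (x,w) \<in> E \<and> (w,c) \<in> E ^^ m" by (rule relpow_Suc_D2)
  then obtain w where w: "(x,w) \<in> E" "(w,c) \<in> E ^^ m" by blast
  then have "y = w" by (intro uniq[OF assms(3)])
  moreover have "w \<in> Vs" using w E_sub by blast
  ultimately show ?thesis unfolding P_def using w by blast
qed

definition isoP :: "'a \<Rightarrow> nat \<Rightarrow> ('a \<Rightarrow> nat list) \<Rightarrow> bool" where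
  "isoP b h f \<longleftrightarrow> inj_on f (P b) \<and> f ` P b = tree_verts (TV vs h) \<and> f b = [] \<and>
     (\<forall>x\<in>P b. \<forall>y\<in>P b. (x,y) \<in> E \<longleftrightarrow> (f x, f y) \<in> tree_edges (TV vs h))"

lemma iso: "b \<in> Vs \<Longrightarrow> \<exists>f. isoP b (ht b) f"
proof (induction "ht b" arbitrary: b rule: less_induct)
  case less
  note b = less.prems
  define L where "L = hs vs (ht b)"
  have TVb: "TV vs (ht b) = Node (map (TV vs) L)" unfolding L_def by (rule TV_hs)
  obtain \<sigma> where \<sigma>: "bij_betw \<sigma> (C b) {j. j < length L}" "\<And>c. c \<in> C b \<Longrightarrow> L ! (\<sigma> c) = ht c"
  proof -
    have "\<exists>\<sigma>. bij_betw \<sigma> (C b) {j. j < length L} \<and> (\<forall>x\<in>C b. L ! (\<sigma> x) = ht x)"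
    proof (rule glue)
      show "finite (C b)" using C_fin b .
      show "finite {j. j < length L}" by simp
      fix a show "card {x \<in> C b. ht x = a} = card {y \<in> {j. j < length L}. L ! y = a}"
        using cnt[OF b, of a] card_filter_count[of L a] unfolding L_def by simp
    qed
    then show ?thesis using that by blast
  qed
  have "\<forall>c\<in>C b. \<exists>f. isoP c (ht c) f"
    using less.hyps ht_C b C_Vs by blast
  then obtain F where F: "\<And>c. c \<in> C b \<Longrightarrow> isoP c (ht c) (F c)" by metis
  define par where "par x = (THE c. c \<in> C b \<and> x \<in> P c)" for x
  have par: "par x \<in> C b \<and> x \<in> P (par x)" if xb: "x \<in> P b" "x \<noteq> b" for x
  proof -
    obtain c where "c \<in> C b" "x \<in> P c" using par_ex[OF xb] by blast
    then have "par x = c" unfolding par_def using par_un by blast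
    then show ?thesis using \<open>c \<in> C b\<close> \<open>x \<in> P c\<close> by simp
  qed
  have par_eq: "par x = c" if "c \<in> C b" "x \<in> P c" for x c
    unfolding par_def using par_un that by blast
  define f where "f x = (if x = b then [] else \<sigma> (par x) # F (par x) x)" for x
  have tvc: "tree_verts (map (TV vs) L ! \<sigma> c) = tree_verts (TV vs (ht c))" if "c \<in> C b" for c
  proof -
    have "\<sigma> c < length L" using \<sigma>(1) that unfolding bij_betw_def by auto
    then have "map (TV vs) L ! \<sigma> c = TV vs (ht c)" using \<sigma>(2)[OF that] by simp
    then show ?thesis by simp
  qed
  have \<sigma>lt: "\<sigma> c < length L" if "c \<in> C b" for c using \<sigma> that unfolding bij_betw_def by auto
  have Fc: "F c c = []" "inj_on (F c) (P c)" "F c ` P c = tree_verts (TV vs (ht c))"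
     "\<forall>x\<in>P c. \<forall>y\<in>P c. (x,y) \<in> E \<longleftrightarrow> (F c x, F c y) \<in> tree_edges (TV vs (ht c))"
    if "c \<in> C b" for c using F[OF that] unfolding isoP_def by auto
  have "inj_on f (P b)"
  proof (rule inj_onI)
    fix x y assume xy: "x \<in> P b" "y \<in> P b" "f x = f y"
    show "x = y"
    proof (cases "x = b \<or> y = b")
      case True then show ?thesis using xy unfolding f_def by (auto split: if_splits)
    next
      case False
      then have e: "\<sigma> (par x) = \<sigma> (par y)" "F (par x) x = F (par y) y" using xy unfolding f_def by auto
      have "par x = par y" using e(1) par xy False \<sigma>(1) unfolding bij_betw_def inj_on_def by metis
      then show ?thesis using e(2) Fc(2) par xy False unfolding inj_on_def by metis
    qed
  qed
  moreover have "f ` P b = tree_verts (TV vs (ht b))"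
  proof
    show "f ` P b \<subseteq> tree_verts (TV vs (ht b))"
    proof
      fix z assume "z \<in> f ` P b"
      then obtain x where x: "x \<in> P b" "z = f x" by auto
      show "z \<in> tree_verts (TV vs (ht b))"
      proof (cases "x = b")
        case True then show ?thesis using x unfolding f_def TVb tree_verts_Node by simp
      next
        case False
        then have "F (par x) x \<in> tree_verts (TV vs (ht (par x)))" using Fc(3) par x by blast
        then show ?thesis using x False par[OF x(1) False] tvc \<sigma>lt unfolding f_def TVb tree_verts_Node by auto
      qed
    qed
    show "tree_verts (TV vs (ht b)) \<subseteq> f ` P b"
    proof
      fix z assume "z \<in> tree_verts (TV vs (ht b))"
      then consider "z = []" | j p where "z = j # p" "j < length L" "p \<in> tree_verts (map (TV vs) L ! j)"
        unfolding TVb tree_verts_Node by auto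
      then show "z \<in> f ` P b"
      proof cases
        case 1 then show ?thesis using P_self b unfolding f_def by force
      next
        case 2
        have "j \<in> \<sigma> ` C b" using 2 \<sigma>(1) unfolding bij_betw_def by simp
        then obtain c where c: "c \<in> C b" "\<sigma> c = j" by blast
        then have "p \<in> F c ` P c" using 2 tvc Fc(3) by metis
        then obtain x where x: "x \<in> P c" "p = F c x" by auto
        have "x \<noteq> b" using b_notin c b x by auto
        moreover have "par x = c" using par_eq c x by auto
        ultimately have "f x = z" unfolding f_def using 2 c x by simp
        moreover have "x \<in> P b" using C_P c x by auto
        ultimately show ?thesis by auto
      qed
    qed
  qed
  moreover have "f b = []" unfolding f_def by simp
  moreover have "(x,y) \<in> E \<longleftrightarrow> (f x, f y) \<in> tree_edges (TV vs (ht b))" if xy: "x \<in> P b" "y \<in> P b" for x y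
  proof (cases "x = b")
    case True
    have "(b,y) \<notin> E"
    proof
      assume "(b,y) \<in> E"
      then have "d b = Suc (d y)" using C_d[of b y] unfolding C_def by auto
      then show False using P_d[OF xy(2) b] by simp
    qed
    then show ?thesis using True unfolding f_def tree_edges_iff by simp
  next
    case False
    define c where "c = par x"
    have c: "c \<in> C b" "x \<in> P c" using par xy False unfolding c_def by auto
    have fx: "f x = \<sigma> c # F c x" unfolding f_def c_def using False by simp
    have fxv: "f x \<in> tree_verts (TV vs (ht b))" using \<open>f ` P b = _\<close> xy by auto
    show ?thesis
    proof (cases "y = b")
      case True
      have "(x,b) \<in> E \<longleftrightarrow> x = c"
      proof
        assume "(x,b) \<in> E"
        then have "x \<in> C b" unfolding C_def by auto
        then show "x = c" using par_un[OF _ c(1) _ c(2)] P_self C_Vs by blast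
      next
        assume "x = c" then show "(x,b) \<in> E" using c unfolding C_def by auto
      qed
      moreover have "x = c \<longleftrightarrow> F c x = []" using Fc(1,2)[OF c(1)] c P_self C_Vs unfolding inj_on_def by metis
      moreover have "f y = []" unfolding f_def using True by simp
      moreover have "butlast (\<sigma> c # F c x) = [] \<longleftrightarrow> F c x = []" by (cases "F c x") auto
      ultimately show ?thesis using True fxv unfolding fx tree_edges_iff by auto
    next
      case yb: False
      define c' where "c' = par y"
      have c': "c' \<in> C b" "y \<in> P c'" using par xy yb unfolding c'_def by auto
      have fy: "f y = \<sigma> c' # F c' y" unfolding f_def c'_def using yb by simp
      have "(x,y) \<in> E \<longleftrightarrow> c' = c \<and> (F c x, F c y) \<in> tree_edges (TV vs (ht c))"
      proof
        assume e: "(x,y) \<in> E"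
        then have "y \<in> P c" using edge_in c yb by blast
        then have "c' = c" using par_un c c' by blast
        then show "c' = c \<and> (F c x, F c y) \<in> tree_edges (TV vs (ht c))" using Fc(4)[OF c(1)] c \<open>y \<in> P c\<close> e by blast
      next
        assume "c' = c \<and> (F c x, F c y) \<in> tree_edges (TV vs (ht c))"
        then show "(x,y) \<in> E" using Fc(4)[OF c(1)] c c' by blast
      qed
      moreover have "c' = c \<longleftrightarrow> \<sigma> c' = \<sigma> c" using \<sigma>(1) c c' unfolding bij_betw_def inj_on_def by metis
      moreover have "F c x \<in> tree_verts (TV vs (ht c))" using Fc(3)[OF c(1)] c by blast
      moreover have "F c' y \<in> tree_verts (TV vs (ht c'))" using Fc(3)[OF c'(1)] c' by blast
      moreover have "F c x \<noteq> [] \<longleftrightarrow> x \<noteq> c" using Fc(1,2)[OF c(1)] c P_self C_Vs unfolding inj_on_def by metis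
      ultimately show ?thesis using fxv unfolding fx fy tree_edges_iff
        by (cases "F c x = []") (auto simp: butlast.simps)
    qed
  qed
  ultimately show ?case unfolding isoP_def by blast
qed

end

theorem lemma3p2:
  fixes vs :: "nat list" and Vs :: "'a set" and E :: "('a \<times> 'a) set" and r :: 'a and k :: nat
  assumes "vs \<noteq> []"
    and "\<forall>x\<in>set vs. 0 < x"
    and "sorted_wrt (\<ge>) vs"
    and "rooted_tree Vs E r"
    and "V_regular vs Vs E"
    and "tree_depth Vs E r k"
  shows "rtree_iso Vs E r (tree_verts (TV vs k)) (tree_edges (TV vs k)) []"
proof -
  interpret vt vs Vs E r k using assms by unfold_locales auto
  have rV: "r \<in> Vs" by (rule r_in)
  have htr: "ht r = k"
  proof (rule antisym)
    obtain x where x: "x \<in> Vs" "(x,r) \<in> E ^^ ht r" using ht_ex[OF rV] by blast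
    then show "ht r \<le> k" using assms(6) unfolding tree_depth_def by blast
    obtain y where y: "y \<in> Vs" "(y,r) \<in> E ^^ k" using assms(6) unfolding tree_depth_def by blast
    then show "k \<le> ht r" using ht_ge[OF rV] by blast
  qed
  have Pr: "P r = Vs"
  proof
    show "P r \<subseteq> Vs" by (rule P_Vs)
    show "Vs \<subseteq> P r"
    proof
      fix x assume x: "x \<in> Vs"
      then obtain n where "(x,r) \<in> E ^^ n" using reach rtrancl_power by blast
      then show "x \<in> P r" unfolding P_def using x by blast
    qed
  qed
  obtain f where f: "isoP r (ht r) f" using iso[OF rV] by blast
  then have "bij_betw f Vs (tree_verts (TV vs k)) \<and> f r = [] \<and>
      (\<forall>x\<in>Vs. \<forall>y\<in>Vs. (x, y) \<in> E \<longleftrightarrow> (f x, f y) \<in> tree_edges (TV vs k))"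
    unfolding isoP_def bij_betw_def Pr htr by blast
  then show ?thesis unfolding rtree_iso_def by blast
qed

end
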